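(* Let $\mathbf{F}$ be a field of characteristic $3$, let $\lambda=(\lambda_1,\lambda_2)$ be a partition with $m=\lambda_1-\lambda_2$, and let $t\in\mathbf{N}$. Then in $S_\mathbf{F}(\lambda)$, \[\psi_{m,t}=\psi_{m,t-1}\Big[\tbinom{m_{t-1}}{2}+\tbinom{m_{t-1}}{1}b(3^{t-1})+\tbinom{m_{t-1}}{0}b(2\cdot3^{t-1})\Big]+\tbinom{m_{t-1}}{2}b(3^{t-1})+\tbinom{m_{t-1}}{1}b(2\cdot3^{t-1}),\] where $m_{t-1}$ is the $(t-1)$-th base-3 digit of $m$.
   Context: $S_\mathbf{F}(\lambda)=\operatorname{End}_{\mathbf{F}S_r}(M^\lambda)$ is a commutative $\mathbf{F}$-algebra with basis $b(0)=\mathbf{1},\dots,b(\lambda_2)$ and multiplication $b(i)b(j)=\sum_{h=\max\{i,j\}}^{i+j}\binom{h}{i}\binom{h}{j}\binom{m+i+j}{i+j-h}b(h)$, $b(a)=0$ for $a>\lambda_2$. For $m=\sum_u m_u3^u$ in base 3, $m_{<u}=\sum_{s<u}m_s3^s$ and $\psi_{m,u}=\sum_{k=1}^{3^u-1}\binom{m_{<u}}{3^u-k}b(k)$ (so $\psi_{m,0}=0$). *)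

theory Defs
  imports Main
begin

text \<open>Elements of the algebra S_F(lambda) are represented by their coefficient
  vectors with respect to the basis b(0),...,b(lambda_2): functions nat => F
  which vanish beyond lambda_2. The parameters are m = lambda_1 - lambda_2 and
  l2 = lambda_2.\<close>

definition bas :: "nat \<Rightarrow> nat \<Rightarrow> 'a::field \<Rightarrow> nat \<Rightarrow> 'a" where
  "bas l2 k c = (\<lambda>h. if h = k \<and> k \<le> l2 then c else 0)"

abbreviation b :: "nat \<Rightarrow> nat \<Rightarrow> nat \<Rightarrow> 'a::field" where
  "b l2 k \<equiv> bas l2 k 1"

definition vadd :: "(nat \<Rightarrow> 'a::field) \<Rightarrow> (nat \<Rightarrow> 'a) \<Rightarrow> nat \<Rightarrow> 'a" where
  "vadd x y = (\<lambda>h. x h + y h)"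

definition vsmul :: "'a::field \<Rightarrow> (nat \<Rightarrow> 'a) \<Rightarrow> nat \<Rightarrow> 'a" where
  "vsmul c x = (\<lambda>h. c * x h)"

text \<open>Structure constant: coefficient of b(h) in b(i) b(j).\<close>
definition sc :: "nat \<Rightarrow> nat \<Rightarrow> nat \<Rightarrow> nat \<Rightarrow> 'a::field" where
  "sc m i j h = (if max i j \<le> h \<and> h \<le> i + j
      then of_nat ((h choose i) * (h choose j) * ((m + i + j) choose (i + j - h))) else 0)"

definition smult :: "nat \<Rightarrow> nat \<Rightarrow> (nat \<Rightarrow> 'a::field) \<Rightarrow> (nat \<Rightarrow> 'a) \<Rightarrow> nat \<Rightarrow> 'a" where
  "smult m l2 x y = (\<lambda>h. if h \<le> l2
      then (\<Sum>i\<le>l2. \<Sum>j\<le>l2. x i * y j * sc m i j h) else 0)"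

definition digit3 :: "nat \<Rightarrow> nat \<Rightarrow> nat" where
  "digit3 m u = m div 3 ^ u mod 3"

definition trunc3 :: "nat \<Rightarrow> nat \<Rightarrow> nat" where
  "trunc3 m u = m mod 3 ^ u"

definition psi :: "nat \<Rightarrow> nat \<Rightarrow> nat \<Rightarrow> nat \<Rightarrow> 'a::field" where
  "psi l2 m u = (\<lambda>h. \<Sum>k\<in>{1..3 ^ u - 1}. of_nat (trunc3 m u choose (3 ^ u - k)) * b l2 k h)"

end

theory Submission imports Defs "HOL-Computational_Algebra.Polynomial" "HOL-Computational_Algebra.Primes" "HOL-Number_Theory.Cong" begin

lemma of_nat_mult_monom: "(of_nat c :: 'a::comm_semiring_1 poly) * monom a k = monom (of_nat c * a) k"
  by (simp add: of_nat_poly monom_0[symmetric] mult_monom)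

lemma pow_expand:
  "((monom 1 N + 1) ^ n :: 'a::comm_semiring_1 poly) = (\<Sum>k\<le>n. monom (of_nat (n choose k)) (N*k))"
  by (simp add: binomial_ring monom_power of_nat_mult_monom)

lemma coeff_binom: "coeff ((monom 1 1 + 1) ^ n :: 'a::comm_semiring_1 poly) j = of_nat (n choose j)"
  by (simp add: pow_expand coeff_sum binomial_eq_0)

lemma coeff_binom': "coeff ((monom 1 (Suc 0) + 1) ^ n :: 'a::comm_semiring_1 poly) j = of_nat (n choose j)"
  using coeff_binom[of n j] by simp

lemma lucas_step:
  assumes ch: "CHAR('a::field) = 3" and N: "N = 3^s" and r: "r < N" and c: "c < N"
  shows "(of_nat ((d*N + r) choose (a*N + c)) :: 'a) = of_nat (d choose a) * of_nat (r choose c)"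
proof -
  let ?P = "monom 1 1 + 1 :: 'a poly"
  have pr: "prime CHAR('a poly)" using ch by simp
  have fr: "?P ^ N = monom 1 N + 1"
    using freshmans_dream'[OF pr, of N s "monom 1 1" 1] ch N by (simp add: monom_power)
  have "?P ^ (d*N + r) = (monom 1 N + 1) ^ d * ?P ^ r"
    unfolding power_add mult.commute[of d N] power_mult fr ..
  also have "\<dots> = (\<Sum>i\<le>d. monom (of_nat (d choose i)) (N*i) * ?P ^ r)"
    by (simp add: pow_expand sum_distrib_right)
  moreover have cb: "\<And>k. coeff (?P^r) k = of_nat (r choose k)" by (rule coeff_binom)
  ultimately have "coeff (?P ^ (d*N + r)) (a*N + c) =
     (\<Sum>i\<le>d. if a*N+c < N*i then 0 else of_nat (d choose i) * of_nat (r choose (a*N + c - N*i)))"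
    by (simp only: coeff_sum coeff_monom_mult cb)
  also have "\<dots> = (\<Sum>i\<le>d. if i = a then of_nat (d choose a) * of_nat (r choose c) else 0)"
  proof (rule sum.cong[OF refl])
    fix i assume "i \<in> {..d}"
    show "(if a*N+c < N*i then 0 else of_nat (d choose i) * of_nat (r choose (a*N + c - N*i)) :: 'a)
       = (if i = a then of_nat (d choose a) * of_nat (r choose c) else 0)"
    proof (cases "i < a")
      case True
      then have "N*(i+1) \<le> N*a" by (intro mult_le_mono2) simp
      then have "r < a*N + c - N*i" using r by (simp add: algebra_simps)
      then show ?thesis using True by (simp add: binomial_eq_0)
    next
      case False
      show ?thesis
      proof (cases "i = a")
        case True then show ?thesis by (simp add: mult.commute)
      next
        case False
        with \<open>\<not> i < a\<close> have "N*(a+1) \<le> N*i" by (intro mult_le_mono2) simp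
        then have "a*N+c < N*i" using c by (simp add: algebra_simps)
        then show ?thesis using False by simp
      qed
    qed
  qed
  also have "\<dots> = of_nat (d choose a) * of_nat (r choose c)"
    by (auto simp: binomial_eq_0)
  finally show ?thesis by (simp add: coeff_binom')
qed

hide_const (open) Polynomial.smult

lemma sc_lemma:
  assumes ch: "CHAR('a::field) = 3" and N: "N = 3^s" and i: "i < N"
  shows "(sc m i (a*N) h :: 'a) = (if h = a*N + i then 1 else 0)"
proof (cases "max i (a*N) \<le> h \<and> h \<le> i + a*N")
  case False
  then show ?thesis by (auto simp: sc_def)
next
  case True
  then obtain h' where h: "h = a*N + h'" and h'i: "h' \<le> i"
    by (metis add.commute add_le_imp_le_left le_add_diff_inverse max.bounded_iff)
  have h'N: "h' < N" using h'i i by simp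
  have L1: "(of_nat (h choose i) :: 'a) = of_nat (h' choose i)"
    using lucas_step[OF ch N h'N i, of a 0] h by simp
  show ?thesis
  proof (cases "h' = i")
    case True
    have L2: "(of_nat (h choose (a*N)) :: 'a) = 1"
      using lucas_step[OF ch N h'N, of 0 a a] h N by simp
    show ?thesis using True h L1 L2 by (simp add: sc_def)
  next
    case False
    then have "h' < i" using h'i by simp
    then have "(of_nat (h choose i) :: 'a) = 0" using L1 by (simp add: binomial_eq_0)
    then show ?thesis using False h by (simp add: sc_def)
  qed
qed

lemma psi_eq:
  "psi l2 m u h = (if 1 \<le> h \<and> h \<le> 3^u - 1 \<and> h \<le> l2 then of_nat (trunc3 m u choose (3^u - h)) else 0)"
proof -
  have "psi l2 m u h = (\<Sum>k\<in>{1..3 ^ u - 1}. if k = h then (if h \<le> l2 then of_nat (trunc3 m u choose (3^u - h)) else 0) else 0)"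
    unfolding psi_def bas_def by (rule sum.cong) auto
  then show ?thesis by (auto simp: sum.delta)
qed

lemma smult_vadd: "smult m l2 x (vadd y z) = vadd (smult m l2 x y) (smult m l2 x z)"
  unfolding Defs.smult_def vadd_def
  by (auto simp: algebra_simps sum.distrib)

lemma smult_vsmul: "smult m l2 x (vsmul c y) = vsmul c (smult m l2 x y)"
  unfolding Defs.smult_def vsmul_def
  by (auto simp: algebra_simps sum_distrib_left)

lemma sum_if_eq: "(\<Sum>j\<le>(n::nat). if j = c \<and> P then f else 0) = (if c \<le> n \<and> P then f else 0)"
  using sum.delta[of "{..n}" c "\<lambda>_. f"] by (cases P) auto

lemma smult_b:
  assumes ch: "CHAR('a::field) = 3" and N: "N = 3^s" and x: "\<And>i. N \<le> i \<Longrightarrow> x i = (0::'a)"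
  shows "smult m l2 x (b l2 (a*N)) h = (if h \<le> l2 \<and> a*N \<le> h then x (h - a*N) else 0)"
proof (cases "h \<le> l2")
  case False then show ?thesis by (simp add: Defs.smult_def)
next
  case hl: True
  have "smult m l2 x (b l2 (a*N)) h = (\<Sum>i\<le>l2. if a*N \<le> l2 then x i * sc m i (a*N) h else 0)"
    unfolding Defs.smult_def bas_def using hl
    by (simp add: if_distrib[of "\<lambda>y. _ * y"] if_distrib[of "\<lambda>y. y * _"] sum_if_eq cong: if_cong)
  also have "\<dots> = (\<Sum>i\<le>l2. if i = h - a*N \<and> a*N \<le> h then x i else 0)"
  proof (rule sum.cong[OF refl])
    fix i assume "i \<in> {..l2}"
    show "(if a*N \<le> l2 then x i * sc m i (a*N) h else 0) = (if i = h - a*N \<and> a*N \<le> h then x i else 0)"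
    proof (cases "i < N")
      case True
      then show ?thesis using sc_lemma[OF ch N True, of m a h] hl by auto
    next
      case False then show ?thesis using x[of i] by (cases "i = h - a*N") auto
    qed
  qed
  also have "\<dots> = (if h \<le> l2 \<and> a*N \<le> h then x (h - a*N) else 0)"
    using hl by (auto simp: sum.delta)
  finally show ?thesis .
qed

theorem mainTheorem6:
  fixes l1 l2 t :: nat
  assumes "CHAR('a::field) = 3"
    and "l2 \<le> l1"
    and "1 \<le> t"
  defines "m \<equiv> l1 - l2"
  defines "d \<equiv> digit3 (l1 - l2) (t - 1)"
  shows "(psi l2 m t :: nat \<Rightarrow> 'a) =
    vadd (vadd
      (smult m l2 (psi l2 m (t - 1))
         (vadd (vadd (vsmul (of_nat (d choose 2)) (b l2 0))
                     (vsmul (of_nat (d choose 1)) (b l2 (3 ^ (t - 1)))))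
               (vsmul (of_nat (d choose 0)) (b l2 (2 * 3 ^ (t - 1))))))
      (vsmul (of_nat (d choose 2)) (b l2 (3 ^ (t - 1)))))
      (vsmul (of_nat (d choose 1)) (b l2 (2 * 3 ^ (t - 1))))"
proof -
  define N where "N = (3::nat)^(t-1)"
  define r where "r = trunc3 m (t-1)"
  have dd: "d = digit3 m (t-1)" using d_def m_def by simp
  have N1: "1 \<le> N" unfolding N_def by simp
  have t3: "(3::nat)^t = N*3" unfolding N_def using assms(3)
    by (metis Suc_diff_1 less_le_trans power_Suc2 zero_less_one)
  have tr: "trunc3 m t = d*N + r"
    unfolding trunc3_def r_def dd digit3_def t3 N_def[symmetric]
    by (simp add: mod_mult2_eq mult.commute)
  have rN: "r < N" unfolding r_def trunc3_def N_def by simp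
  have d3: "d < 3" unfolding dd digit3_def by simp
  have ch: "CHAR('a) = 3" by (rule assms(1))
  let ?P = "psi l2 m (t-1) :: nat \<Rightarrow> 'a"
  have Ph: "\<And>h. ?P h = (if 1 \<le> h \<and> h \<le> N - 1 \<and> h \<le> l2 then of_nat (r choose (N - h)) else 0)"
    by (simp add: psi_eq N_def r_def)
  have Pz: "\<And>i. N \<le> i \<Longrightarrow> ?P i = 0" using Ph N1 by auto
  have Lh: "\<And>h. (psi l2 m t :: nat \<Rightarrow> 'a) h = (if 1 \<le> h \<and> h \<le> 3*N - 1 \<and> h \<le> l2 then of_nat ((d*N+r) choose (3*N - h)) else 0)"
    by (simp add: psi_eq tr t3 mult.commute)
  have b0: "b l2 0 = b l2 (0*N)" by simp
  have b1: "b l2 (3^(t-1)) = b l2 (1*N)" by (simp add: N_def)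
  have b2: "b l2 (2*3^(t-1)) = b l2 (2*N)" by (simp add: N_def)
  note sb = smult_b[OF ch N_def Pz]
  show ?thesis
    unfolding b0 b1 b2 smult_vadd smult_vsmul
    apply (rule ext)
    subgoal for h
    proof -
      have LL: "\<And>A c. c < N \<Longrightarrow> (of_nat ((d*N + r) choose (A*N + c)) :: 'a) = of_nat (d choose A) * of_nat (r choose c)"
        by (rule lucas_step[OF ch N_def rN])
      consider (z) "h = 0" | (a) "1 \<le> h" "h < N" | (b) "h = N" | (c) "N < h" "h < 2*N" | (e) "h = 2*N"
        | (f) "2*N < h" "h < 3*N" | (g) "3*N \<le> h" by linarith
      then show ?thesis
      proof cases
        case z then show ?thesis
          apply (simp only: vadd_def vsmul_def)
          apply (simp only: sb)
          apply (simp only: Lh Ph bas_def)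
          using N1 by simp
      next
        case a
        have "3*N - h = 2*N + (N-h)" using a by simp
        then have L: "(of_nat ((d*N + r) choose (3*N - h)) :: 'a) = of_nat (d choose 2) * of_nat (r choose (N-h))"
          using LL[of "N-h" 2] a by simp
        show ?thesis
          apply (simp only: vadd_def vsmul_def)
          apply (simp only: sb)
          apply (simp only: Lh Ph bas_def)
          using N1 a L by (simp; auto)
      next
        case b
        have L: "(of_nat ((d*N + r) choose (3*N - h)) :: 'a) = of_nat (d choose 2)"
          using LL[of 0 2] b N1 by (simp add: mult_2)
        show ?thesis
          apply (simp only: vadd_def vsmul_def)
          apply (simp only: sb)
          apply (simp only: Lh Ph bas_def)
          using N1 b L by (simp; auto)
      next
        case c
        have "3*N - h = 1*N + (2*N-h)" using c by simp
        then have L: "(of_nat ((d*N + r) choose (3*N - h)) :: 'a) = of_nat d * of_nat (r choose (N+N-h))"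
          using LL[of "2*N-h" 1] c by (simp add: mult_2)
        show ?thesis
          apply (simp only: vadd_def vsmul_def)
          apply (simp only: sb)
          apply (simp only: Lh Ph bas_def)
          using N1 c L by (simp; auto)
      next
        case e
        have L: "(of_nat ((d*N + r) choose (3*N - h)) :: 'a) = of_nat d"
          using LL[of 0 1] e N1 by simp
        show ?thesis
          apply (simp only: vadd_def vsmul_def)
          apply (simp only: sb)
          apply (simp only: Lh Ph bas_def)
          using N1 e L by (simp; auto)
      next
        case f
        have "3*N - h = 0*N + (3*N-h)" using f by simp
        then have L: "(of_nat ((d*N + r) choose (3*N - h)) :: 'a) = of_nat (r choose (3*N-h))"
          using LL[of "3*N-h" 0] f by simp
        show ?thesis
          apply (simp only: vadd_def vsmul_def)
          apply (simp only: sb)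
          apply (simp only: Lh Ph bas_def)
          using N1 f L by (simp; auto)
      next
        case g
        show ?thesis
          apply (simp only: vadd_def vsmul_def)
          apply (simp only: sb)
          apply (simp only: Lh Ph bas_def)
          using N1 g by (simp; auto)
      qed
    qed
    done
qed

end
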